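(* Let $n\in\mathbb{N}$ and $0\leq\delta\leq n-1$, let $q$ be a prime power with $n\leq q-1$, $\mathbb{F}:=\mathbb{F}_q$, and $\alpha\in\mathbb{F}$ with $\mathrm{ord}(\alpha)\geq n$. Let \[ G:=\sum_{\nu=0}^{\delta}z^\nu\begin{pmatrix}1&\alpha^\nu&\alpha^{2\nu}&\ldots&\alpha^{(n-1)\nu}\end{pmatrix}\in\mathbb{F}[z]^{1\times n} \] and $\mathcal{C}:=\mathrm{im}\,G\subseteq\mathbb{F}[z]^n$. For $j\geq\delta+1$ define the $j$th extended row distance \[ \hat d^r_j:=\min\{\mathrm{wt}(uG)\mid u\in\mathbb{F}[z],\ u_0\neq0,\ \deg u=j-\delta-1,\ \text{no }\delta\text{ consecutive coefficients of }u\text{ are zero}\}, \] where $u=\sum_i u_iz^i$. Then $\hat d^r_j\geq (n-\delta)j+\delta(\delta+1)$ for all $j\geq\delta+1$.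
   Context: $\mathrm{ord}(\alpha)$ is the multiplicative order of $\alpha$. For $v=\sum_{j=0}^N v_jz^j\in\mathbb{F}[z]^n$ with $v_j\in\mathbb{F}^n$, $\mathrm{wt}(v)=\sum_j\mathrm{wt}(v_j)$ where $\mathrm{wt}(v_j)$ is the Hamming weight. The "consecutive coefficients of $u$" refer to the coefficients $u_0,\ldots,u_{\deg u}$. *)

theory Defs
  imports "HOL-Computational_Algebra.Polynomial" "HOL-Computational_Algebra.Primes"
          "HOL-Library.Extended_Nat" "HOL-Library.Cardinality"
begin

definition mult_ord :: "'a::field \<Rightarrow> nat" where
  "mult_ord a = (if \<exists>k>0. a ^ k = 1 then (LEAST k. 0 < k \<and> a ^ k = 1) else 0)"

text \<open>Elements of F[z]^n are modelled as functions nat => 'a poly, component i for i < n.\<close>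
definition genG :: "nat \<Rightarrow> 'a::field \<Rightarrow> nat \<Rightarrow> 'a poly" where
  "genG \<delta> \<alpha> i = (\<Sum>\<nu>\<le>\<delta>. monom (\<alpha> ^ (i * \<nu>)) \<nu>)"

definition wt_vec :: "nat \<Rightarrow> (nat \<Rightarrow> 'a::zero poly) \<Rightarrow> nat" where
  "wt_vec n v = (\<Sum>i<n. card {j. coeff (v i) j \<noteq> 0})"

definition no_consec_zeros :: "nat \<Rightarrow> 'a::zero poly \<Rightarrow> bool" where
  "no_consec_zeros \<delta> u =
     (\<forall>i. i + \<delta> \<le> degree u + 1 \<longrightarrow> (\<exists>k\<in>{i..<i+\<delta>}. coeff u k \<noteq> 0))"

text \<open>j-th extended row distance (minimum over the admissible u; the minimum of the
  empty set is infinity).\<close>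
definition ext_row_dist :: "nat \<Rightarrow> nat \<Rightarrow> 'a::field \<Rightarrow> nat \<Rightarrow> enat" where
  "ext_row_dist n \<delta> \<alpha> j =
     Inf {enat (wt_vec n (\<lambda>i. u * genG \<delta> \<alpha> i)) | u.
            coeff u 0 \<noteq> 0 \<and> degree u = j - \<delta> - 1 \<and> no_consec_zeros \<delta> u}"

end

theory Submission
  imports Defs
begin

lemma roots_bound:
  fixes P :: "'a::field poly" and f :: "nat \<Rightarrow> 'a"
  assumes "P \<noteq> 0" "\<forall>\<nu><a. coeff P \<nu> = 0" "degree P \<le> b" "inj_on f S" "\<forall>i\<in>S. f i \<noteq> 0"
  shows "card {i\<in>S. poly P (f i) = 0} \<le> b - a"
proof -
  define R where "R = poly_shift a P"
  have PR: "P = monom 1 a * R"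
    by (rule poly_eqI) (auto simp: coeff_monom_mult R_def coeff_poly_shift assms(2))
  have R0: "R \<noteq> 0" using PR assms(1) by auto
  have dR: "degree R \<le> b - a"
  proof (rule degree_le, intro allI impI)
    fix i assume "i > b - a"
    then have "i + a > b \<or> a > b" by auto
    then show "coeff R i = 0"
    proof
      assume "i + a > b" then show ?thesis unfolding R_def coeff_poly_shift
        using assms(3) by (intro coeff_eq_0) linarith
    next
      assume "a > b"
      then have "\<forall>k. coeff P k = 0" using assms(2,3) coeff_eq_0
        by (metis le_less_trans linorder_not_le)
      then have "P = 0" by (simp add: poly_eqI)
      with assms(1) show ?thesis by simp
    qed
  qed
  have "{i\<in>S. poly P (f i) = 0} = {i\<in>S. poly R (f i) = 0}"
    using assms(5) by (auto simp: PR poly_monom)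
  also have "card \<dots> \<le> card {x. poly R x = 0}"
  proof -
    have "f ` {i\<in>S. poly R (f i) = 0} \<subseteq> {x. poly R x = 0}" by auto
    moreover have "inj_on f {i\<in>S. poly R (f i) = 0}" using assms(4) inj_on_subset by fastforce
    ultimately show ?thesis using poly_roots_finite[OF R0]
      by (metis card_image card_mono)
  qed
  also have "\<dots> \<le> degree R" by (rule card_poly_roots_bound[OF R0])
  finally show ?thesis using dR by linarith
qed

lemma sum_id:
  fixes m d :: nat
  shows "(\<Sum>k\<le>m+d. min d k - (k - m)) = m * d"
proof (induction d)
  case 0 then show ?case by simp
next
  case (Suc d)
  have "(\<Sum>k\<le>m+Suc d. min (Suc d) k - (k - m)) = (\<Sum>k\<le>m+d. min (Suc d) k - (k - m)) + 0"
    by simp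
  also have "(\<Sum>k\<le>m+d. min (Suc d) k - (k - m)) = (\<Sum>k\<le>m+d. (min d k - (k - m)) + (if d < k then 1 else 0))"
    by (rule sum.cong) auto
  also have "\<dots> = (\<Sum>k\<le>m+d. min d k - (k - m)) + (\<Sum>k\<le>m+d. (if d < k then 1 else 0))"
    by (rule sum.distrib)
  also have "(\<Sum>k\<le>m+d. (if d < k then 1 else 0)) = card {k. k \<le> m + d \<and> d < k}"
    by (simp add: sum.If_cases Int_def)
  also have "{k. k \<le> m + d \<and> d < k} = {d<..m+d}" by auto
  finally show ?case using Suc by simp
qed

lemma alpha_inj:
  fixes \<alpha> :: "'a::field"
  assumes "mult_ord \<alpha> \<ge> n" "1 \<le> n"
  shows "inj_on (\<lambda>i. \<alpha> ^ i) {..<n}" "\<forall>i. \<alpha> ^ i \<noteq> 0"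
proof -
  have ex: "\<exists>k>0. \<alpha> ^ k = 1"
    using assms by (cases "\<exists>k>0. \<alpha> ^ k = 1") (auto simp: mult_ord_def)
  then have a0: "\<alpha> \<noteq> 0" by (auto simp: power_0_left)
  then show "\<forall>i. \<alpha> ^ i \<noteq> 0" by simp
  have least: "\<And>k. 0 < k \<Longrightarrow> \<alpha> ^ k = 1 \<Longrightarrow> n \<le> k"
  proof -
    fix k assume "0 < k" "\<alpha> ^ k = 1"
    then have "(LEAST k. 0 < k \<and> \<alpha> ^ k = 1) \<le> k" by (intro Least_le) simp
    then show "n \<le> k" using assms ex unfolding mult_ord_def by simp
  qed
  have *: "\<alpha> ^ i \<noteq> \<alpha> ^ l" if "i < l" "l < n" for i l
  proof
    assume "\<alpha> ^ i = \<alpha> ^ l"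
    moreover have "\<alpha> ^ l = \<alpha> ^ i * \<alpha> ^ (l - i)"
      using that by (metis le_add_diff_inverse less_imp_le power_add)
    ultimately have "\<alpha> ^ i * \<alpha> ^ (l - i) = \<alpha> ^ i * 1" by simp
    then have "\<alpha> ^ (l - i) = 1" using a0 by simp
    then have "n \<le> l - i" using least that by simp
    then show False using that by simp
  qed
  show "inj_on (\<lambda>i. \<alpha> ^ i) {..<n}"
    unfolding inj_on_def
  proof (intro ballI impI)
    fix x y assume "x \<in> {..<n}" "y \<in> {..<n}" "\<alpha> ^ x = \<alpha> ^ y"
    then show "x = y" using *[of x y] *[of y x] by (cases x y rule: linorder_cases) auto
  qed
qed

lemma coeff_uG:
  fixes u :: "'a::field poly"
  shows "coeff (u * genG \<delta> \<alpha> i) k =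
    poly (\<Sum>\<nu>\<le>\<delta>. monom (if \<nu> \<le> k then coeff u (k - \<nu>) else 0) \<nu>) (\<alpha> ^ i)"
proof -
  have "coeff (u * genG \<delta> \<alpha> i) k = (\<Sum>\<nu>\<le>\<delta>. coeff (monom (\<alpha> ^ (i * \<nu>)) \<nu> * u) k)"
    unfolding genG_def sum_distrib_left coeff_sum by (simp add: mult.commute)
  also have "\<dots> = (\<Sum>\<nu>\<le>\<delta>. (if \<nu> \<le> k then coeff u (k - \<nu>) else 0) * (\<alpha> ^ i) ^ \<nu>)"
  proof (rule sum.cong)
    fix x assume "x \<in> {..\<delta>}"
    show "coeff (monom (\<alpha> ^ (i * x)) x * u) k = (if x \<le> k then coeff u (k - x) else 0) * (\<alpha> ^ i) ^ x"
      unfolding coeff_monom_mult by (simp add: power_mult mult.commute)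
  qed simp
  finally show ?thesis by (simp add: poly_sum poly_monom)
qed

lemma coeff_Pk:
  fixes u :: "'a::field poly"
  shows "coeff (\<Sum>\<nu>\<le>\<delta>. monom (if \<nu> \<le> k then coeff u (k - \<nu>) else 0) \<nu>) t =
     (if t \<le> \<delta> \<and> t \<le> k then coeff u (k - t) else 0)"
  unfolding coeff_sum coeff_monom by (simp add: sum.delta)

lemma arith_fin:
  fixes n d m :: nat assumes "d \<le> n"
  shows "(n - d) * (m + d + 1) + d * (d + 1) = n * (m + d + 1) - m * d"
proof -
  obtain e where "n = d + e" using assms le_Suc_ex by blast
  then show ?thesis by (simp add: algebra_simps)
qed

theorem proposition2p4:
  fixes n \<delta> q :: nat and \<alpha> :: "'a::{finite,field}"
  assumes "1 \<le> n" and "\<delta> \<le> n - 1"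
    and "\<exists>p k. prime p \<and> 0 < k \<and> q = p ^ k"
    and "CARD('a) = q"
    and "n \<le> q - 1"
    and "mult_ord \<alpha> \<ge> n"
  shows "\<forall>j \<ge> \<delta> + 1. ext_row_dist n \<delta> \<alpha> j \<ge> enat ((n - \<delta>) * j + \<delta> * (\<delta> + 1))"
proof (intro allI impI)
  fix j assume j: "j \<ge> \<delta> + 1"
  define m where "m = j - \<delta> - 1"
  have jm: "j = m + \<delta> + 1" using j m_def by simp
  have inj: "inj_on (\<lambda>i. \<alpha> ^ i) {..<n}" and nz: "\<forall>i. \<alpha> ^ i \<noteq> 0"
    using alpha_inj[OF assms(6) assms(1)] by auto
  show "ext_row_dist n \<delta> \<alpha> j \<ge> enat ((n - \<delta>) * j + \<delta> * (\<delta> + 1))"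
    unfolding ext_row_dist_def
  proof (rule Inf_greatest, clarify)
    fix u :: "'a poly"
    assume u0: "coeff u 0 \<noteq> 0" and du: "degree u = j - \<delta> - 1" and nc: "no_consec_zeros \<delta> u"
    have dum: "degree u = m" using du m_def by simp
    have unz: "u \<noteq> 0" using u0 by auto
    define P where "P k = (\<Sum>\<nu>\<le>\<delta>. monom (if \<nu> \<le> k then coeff u (k - \<nu>) else 0) \<nu>)" for k
    have cP: "coeff (P k) t = (if t \<le> \<delta> \<and> t \<le> k then coeff u (k - t) else 0)" for k t
      unfolding P_def by (rule coeff_Pk)
    have cuG: "coeff (u * genG \<delta> \<alpha> i) k = poly (P k) (\<alpha> ^ i)" for i k
      unfolding P_def by (rule coeff_uG)
    define N where "N = m + \<delta>"
    have Pbig: "P k = 0" if "k > N" for k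
    proof (rule poly_eqI)
      fix t show "coeff (P k) t = coeff 0 t"
        using that unfolding cP N_def by (auto intro!: coeff_eq_0 simp: dum)
    qed
    have Pnz: "P k \<noteq> 0" if "k \<le> N" for k
    proof -
      have "\<exists>t. t \<le> \<delta> \<and> t \<le> k \<and> coeff u (k - t) \<noteq> 0"
      proof (cases "k < \<delta>")
        case True then show ?thesis using u0 by (intro exI[of _ k]) auto
      next
        case kd: False
        show ?thesis
        proof (cases "k > m")
          case True
          have "coeff u m \<noteq> 0" using unz dum by (metis leading_coeff_0_iff)
          then show ?thesis using True that unfolding N_def by (intro exI[of _ "k - m"]) auto
        next
          case False
          then have "(k - \<delta>) + \<delta> \<le> degree u + 1" using kd dum by simp
          then obtain kk where kk: "kk \<in> {k - \<delta>..<k - \<delta> + \<delta>}" "coeff u kk \<noteq> 0"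
            using nc unfolding no_consec_zeros_def by blast
          then show ?thesis using kd by (intro exI[of _ "k - kk"]) auto
        qed
      qed
      then obtain t where "coeff (P k) t \<noteq> 0" using cP by metis
      then show ?thesis by auto
    qed
    define h where "h k = min \<delta> k - (k - m)" for k
    have roots: "card {i\<in>{..<n}. poly (P k) (\<alpha> ^ i) = 0} \<le> h k" if "k \<le> N" for k
      unfolding h_def
    proof (rule roots_bound[OF Pnz[OF that] _ _ inj])
      show "\<forall>\<nu><k - m. coeff (P k) \<nu> = 0" unfolding cP by (auto intro!: coeff_eq_0 simp: dum)
      show "degree (P k) \<le> min \<delta> k" by (rule degree_le) (auto simp: cP)
      show "\<forall>i\<in>{..<n}. \<alpha> ^ i \<noteq> 0" using nz by auto
    qed
    have hle: "h k \<le> n" for k unfolding h_def using assms(1,2) by linarith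
    have cardrow: "card {k. coeff (u * genG \<delta> \<alpha> i) k \<noteq> 0} =
        (\<Sum>k\<le>N. if poly (P k) (\<alpha> ^ i) \<noteq> 0 then 1 else 0)" for i
    proof -
      have "{k. coeff (u * genG \<delta> \<alpha> i) k \<noteq> 0} = {k\<in>{..N}. poly (P k) (\<alpha> ^ i) \<noteq> 0}"
        unfolding cuG using Pbig by (auto, metis not_le poly_0)
      then show ?thesis by (simp add: sum.If_cases Int_def)
    qed
    have colk: "(\<Sum>i<n. (if poly (P k) (\<alpha> ^ i) \<noteq> 0 then 1 else 0)) \<ge> n - h k" if "k \<le> N" for k
    proof -
      have "(\<Sum>i<n. (if poly (P k) (\<alpha> ^ i) \<noteq> 0 then 1 else (0::nat))) =
          card {i\<in>{..<n}. poly (P k) (\<alpha> ^ i) \<noteq> 0}"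
        by (simp add: sum.If_cases Int_def)
      also have "{i\<in>{..<n}. poly (P k) (\<alpha> ^ i) \<noteq> 0} = {..<n} - {i\<in>{..<n}. poly (P k) (\<alpha> ^ i) = 0}"
        by auto
      also have "card \<dots> = n - card {i\<in>{..<n}. poly (P k) (\<alpha> ^ i) = 0}"
        by (subst card_Diff_subset) auto
      finally show ?thesis using roots[OF that] by linarith
    qed
    have "wt_vec n (\<lambda>i. u * genG \<delta> \<alpha> i) = (\<Sum>i<n. \<Sum>k\<le>N. if poly (P k) (\<alpha> ^ i) \<noteq> 0 then 1 else 0)"
      unfolding wt_vec_def cardrow by simp
    also have "\<dots> = (\<Sum>k\<le>N. \<Sum>i<n. if poly (P k) (\<alpha> ^ i) \<noteq> 0 then 1 else 0)"
      by (rule sum.swap)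
    also have "\<dots> \<ge> (\<Sum>k\<le>N. n - h k)"
      by (rule sum_mono) (use colk in auto)
    finally have w1: "wt_vec n (\<lambda>i. u * genG \<delta> \<alpha> i) \<ge> (\<Sum>k\<le>N. n - h k)" .
    have "(\<Sum>k\<le>N. n - h k) + (\<Sum>k\<le>N. h k) = (\<Sum>k\<le>N. n)"
      unfolding sum.distrib[symmetric] using hle by (intro sum.cong) auto
    moreover have "(\<Sum>k\<le>N. h k) = m * \<delta>" unfolding h_def N_def by (rule sum_id)
    ultimately have "(\<Sum>k\<le>N. n - h k) = n * (m + \<delta> + 1) - m * \<delta>" unfolding N_def
      by (simp add: algebra_simps)
    also have "\<dots> = (n - \<delta>) * j + \<delta> * (\<delta> + 1)" unfolding jm
      by (rule arith_fin[symmetric]) (use assms(1,2) in linarith)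
    finally show "enat ((n - \<delta>) * j + \<delta> * (\<delta> + 1)) \<le> enat (wt_vec n (\<lambda>i. u * genG \<delta> \<alpha> i))"
      using w1 by simp
  qed
qed

end
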